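(* The condition $C_2$ is not maximal in general: for $n=2$ (three processes), $t=1$, $k=1$ and values $V=\{0,1\}$, there is a condition $C'$ with $C_2\subsetneq C'$ such that consensus ($1$-set agreement) is solvable on $C'\times R^1_2$ (for instance $C'=C_2\cup\{(1,1,0)\}$).
   Context: Fix processes $\Pi_n=\{0,\dots,n\}$. $ImS_n$ is the set of directed graphs $G$ on $\Pi_n$ containing all self-loops such that in-neighbourhoods $In_G(a)=\{b:(b,a)\in A(G)\}$ are totally ordered by inclusion and $(a,b),(b,c)\in A(G)\Rightarrow(a,c)\in A(G)$; $IIS_n=ImS_n^\omega$. In an execution $\iota.w$, $w=G_1G_2\cdots$, processes start with inputs from $\iota$, and in round $r$ process $q$ receives the state of $p$ iff $(p,q)\in A(G_r)$, then updates its state. $Q(w)$ is the set of processes heard by every process in infinitely many rounds; the iterated $t$-resilient model is $R^t_n=\{w\in IIS_n:|Q(w)|\ge n+1-t\}$. An input vector is a map $I:\Pi_n\to V$, written $(I(0),\dots,I(n))$; a condition is a set of input vectors. $k$-set agreement over $V$: each process must decide a value that is the input of some process, and at most $k$ distinct values are decided; it is solvable on $C\times R^t_n$ if some algorithm achieves this, every process deciding after finitely many rounds, for every $I\in C$, $w\in R^t_n$. A condition $C$ is maximal if $k$-set agreement is solvable on $C\times R^t_n$ but not on $C'\times R^t_n$ for any $C'\supsetneq C$. For an input vector $I$, let $\#a_1\ge\#a_2\ge\dots$ be the numbers of occurrences of the distinct values of $I$ in nonincreasing order (with $\#a_i=0$ beyond the number of distinct values). $C_2$ is the set of input vectors with $\sum_{i=1}^{k}\#a_i-k\cdot\#a_{k+1}>t$.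 *)

theory Defs
  imports Main
begin

type_synonym graph = "(nat \<times> nat) set"

definition In_nb :: "graph \<Rightarrow> nat \<Rightarrow> nat set" where
  "In_nb G a = {b. (b, a) \<in> G}"

definition ImS :: "nat \<Rightarrow> graph \<Rightarrow> bool" where
  "ImS n G \<longleftrightarrow>
     G \<subseteq> {0..n} \<times> {0..n}
   \<and> (\<forall>a\<le>n. (a, a) \<in> G)
   \<and> (\<forall>a\<le>n. \<forall>b\<le>n. In_nb G a \<subseteq> In_nb G b \<or> In_nb G b \<subseteq> In_nb G a)
   \<and> (\<forall>a b c. (a, b) \<in> G \<longrightarrow> (b, c) \<in> G \<longrightarrow> (a, c) \<in> G)"

text \<open>An infinite word G_1 G_2 ...; round r+1 uses graph w r.\<close>
definition IIS :: "nat \<Rightarrow> (nat \<Rightarrow> graph) set" where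
  "IIS n = {w. \<forall>r. ImS n (w r)}"

definition Qset :: "nat \<Rightarrow> (nat \<Rightarrow> graph) \<Rightarrow> nat set" where
  "Qset n w = {p. p \<le> n \<and> infinite {r. \<forall>q\<le>n. (p, q) \<in> w r}}"

definition Rmodel :: "nat \<Rightarrow> nat \<Rightarrow> (nat \<Rightarrow> graph) set" where
  "Rmodel n t = {w \<in> IIS n. card (Qset n w) \<ge> n + 1 - t}"

text \<open>Full-information views: the state of a process.\<close>
datatype 'v view = Init nat 'v | Rnd nat "(nat \<times> 'v view) list"

text \<open>Input vectors are lists of length n+1 (entry i = input of process i).\<close>
fun fi_view :: "nat \<Rightarrow> 'v list \<Rightarrow> (nat \<Rightarrow> graph) \<Rightarrow> nat \<Rightarrow> nat \<Rightarrow> 'v view" where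
  "fi_view n I w 0 q = Init q (I ! q)"
| "fi_view n I w (Suc r) q =
     Rnd q (map (\<lambda>p. (p, fi_view n I w r p)) (filter (\<lambda>p. (p, q) \<in> w r) [0..<Suc n]))"

definition input_vectors :: "nat \<Rightarrow> 'v set \<Rightarrow> 'v list set" where
  "input_vectors n V = {I. length I = Suc n \<and> set I \<subseteq> V}"

text \<open>An algorithm is a decision map on full-information views (None = undecided);
  a process decides in the first round in which the map is defined.\<close>
definition decision :: "('v view \<Rightarrow> 'v option) \<Rightarrow> nat \<Rightarrow> 'v list \<Rightarrow> (nat \<Rightarrow> graph) \<Rightarrow> nat \<Rightarrow> 'v" where
  "decision \<delta> n I w q = the (\<delta> (fi_view n I w (LEAST r. \<delta> (fi_view n I w r q) \<noteq> None) q))"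

definition solves_set_agreement ::
  "nat \<Rightarrow> nat \<Rightarrow> nat \<Rightarrow> 'v list set \<Rightarrow> ('v view \<Rightarrow> 'v option) \<Rightarrow> bool" where
  "solves_set_agreement n t k C \<delta> \<longleftrightarrow>
     (\<forall>I\<in>C. \<forall>w\<in>Rmodel n t.
        (\<forall>q\<le>n. \<exists>r. \<delta> (fi_view n I w r q) \<noteq> None)
      \<and> (\<forall>q\<le>n. decision \<delta> n I w q \<in> set I)
      \<and> card {decision \<delta> n I w q | q. q \<le> n} \<le> k)"

definition set_agreement_solvable :: "nat \<Rightarrow> nat \<Rightarrow> nat \<Rightarrow> 'v list set \<Rightarrow> bool" where
  "set_agreement_solvable n t k C \<longleftrightarrow> (\<exists>\<delta>. solves_set_agreement n t k C \<delta>)"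

text \<open>Occurrence counts of the distinct values, nonincreasing; index i (0-based)
  is #a_(i+1), and 0 beyond the number of distinct values.\<close>
definition occ_counts :: "'v list \<Rightarrow> nat list" where
  "occ_counts I = rev (sort (map (count_list I) (remdups I)))"

definition occ :: "'v list \<Rightarrow> nat \<Rightarrow> nat" where
  "occ I i = (if i < length (occ_counts I) then occ_counts I ! i else 0)"

definition C2 :: "nat \<Rightarrow> nat \<Rightarrow> nat \<Rightarrow> 'v set \<Rightarrow> 'v list set" where
  "C2 n t k V = {I \<in> input_vectors n V.
     int (\<Sum>i<k. occ I i) - int k * int (occ I k) > int t}"

end

theory Submission
  imports Defs
begin

fun inits :: "'v view \<Rightarrow> (nat \<times> 'v) set" where
  "inits (Init p v) = {(p, v)}"
| "inits (Rnd q xs) = (\<Union>x\<in>set xs. inits (snd x))"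

lemma inits_Suc:
  "inits (fi_view n I w (Suc r) q) = (\<Union>p\<in>{p. p < Suc n \<and> (p, q) \<in> w r}. inits (fi_view n I w r p))"
  by (simp del: upt_Suc add: image_image)

lemma inits_sub:
  "q \<le> n \<Longrightarrow> inits (fi_view n I w r q) \<subseteq> {(p, I ! p) | p. p \<le> n}"
proof (induction r arbitrary: q)
  case 0
  then show ?case by auto
next
  case (Suc r)
  show ?case
  proof
    fix x assume "x \<in> inits (fi_view n I w (Suc r) q)"
    then obtain p where "p < Suc n" "x \<in> inits (fi_view n I w r p)" unfolding inits_Suc by auto
    then show "x \<in> {(p, I ! p) | p. p \<le> n}" using Suc.IH[of p] by auto
  qed
qed

lemma inits_self:
  assumes "\<forall>r. (q, q) \<in> w r" "q \<le> n"
  shows "(q, I ! q) \<in> inits (fi_view n I w r q)"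
proof (induction r)
  case 0
  then show ?case by simp
next
  case (Suc r)
  have "q < Suc n \<and> (q, q) \<in> w r" using assms by auto
  then show ?case using Suc unfolding inits_Suc by blast
qed

lemma inits_step:
  assumes "(p, q) \<in> w r" "p \<le> n"
  shows "inits (fi_view n I w r p) \<subseteq> inits (fi_view n I w (Suc r) q)"
proof -
  have "p < Suc n" using assms by auto
  then show ?thesis using assms(1) unfolding inits_Suc by blast
qed

definition dlt :: "nat view \<Rightarrow> nat option" where
  "dlt v = (let S = inits v in
     if (0,1) \<in> S \<or> (1,1) \<in> S \<or> (2,1) \<in> S then Some 1
     else if (0,0) \<in> S \<or> (1,0) \<in> S then Some 0 else None)"

definition Cp :: "nat list set" where
  "Cp = {[0,0,0],[1,1,1],[1,1,0]}"

lemma iv_enum: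
  assumes "I \<in> input_vectors 2 {0, 1::nat}"
  shows "I \<in> {[0,0,0],[0,0,1],[0,1,0],[0,1,1],[1,0,0],[1,0,1],[1,1,0],[1,1,1]}"
proof -
  have l: "length I = 3" and s: "set I \<subseteq> {0,1}" using assms by (auto simp: input_vectors_def)
  obtain a b c where "I = [a,b,c]"
  proof (cases I)
    case Nil then show ?thesis using l by simp
  next
    case (Cons a I1)
    then show ?thesis
    proof (cases I1)
      case Nil then show ?thesis using l Cons by simp
    next
      case (Cons b I2)
      then show ?thesis
      proof (cases I2)
        case Nil then show ?thesis using l Cons \<open>I = a # I1\<close> by simp
      next
        case (Cons c I3)
        then have "I3 = []" using l \<open>I = a # I1\<close> \<open>I1 = b # I2\<close> by simp
        then show ?thesis using that Cons \<open>I = a # I1\<close> \<open>I1 = b # I2\<close> by simp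
      qed
    qed
  qed
  with s show ?thesis by auto
qed

lemma C2_eq: "C2 2 1 1 {0, 1::nat} = {[0,0,0],[1,1,1]}"
proof
  show "C2 2 1 1 {0, 1::nat} \<subseteq> {[0,0,0],[1,1,1]}"
  proof
    fix I assume a: "I \<in> C2 2 1 1 {0, 1::nat}"
    then have "I \<in> input_vectors 2 {0, 1::nat}" by (simp add: C2_def)
    have "int (\<Sum>i<1. occ I i) - int 1 * int (occ I 1) > int 1" using a by (simp add: C2_def)
    then have c: "occ I 0 > 1 + occ I 1" by simp
    have m: "occ L 0 = 2 \<and> occ L 1 = 1" if "L \<in> {[0,0,1],[0,1,0],[0,1,1],[1,0,0],[1,0,1],[1,1,0::nat]}" for L
    proof -
      have "occ [0,0,1::nat] 0 = 2 \<and> occ [0,0,1::nat] 1 = 1" by (simp add: occ_def occ_counts_def)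
      moreover have "occ [0,1,0::nat] 0 = 2 \<and> occ [0,1,0::nat] 1 = 1" by (simp add: occ_def occ_counts_def)
      moreover have "occ [0,1,1::nat] 0 = 2 \<and> occ [0,1,1::nat] 1 = 1" by (simp add: occ_def occ_counts_def)
      moreover have "occ [1,0,0::nat] 0 = 2 \<and> occ [1,0,0::nat] 1 = 1" by (simp add: occ_def occ_counts_def)
      moreover have "occ [1,0,1::nat] 0 = 2 \<and> occ [1,0,1::nat] 1 = 1" by (simp add: occ_def occ_counts_def)
      moreover have "occ [1,1,0::nat] 0 = 2 \<and> occ [1,1,0::nat] 1 = 1" by (simp add: occ_def occ_counts_def)
      ultimately show ?thesis using that by blast
    qed
    have "I \<notin> {[0,0,1],[0,1,0],[0,1,1],[1,0,0],[1,0,1],[1,1,0::nat]}"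
    proof
      assume "I \<in> {[0,0,1],[0,1,0],[0,1,1],[1,0,0],[1,0,1],[1,1,0::nat]}"
      from m[OF this] c show False by simp
    qed
    with iv_enum[OF \<open>I \<in> input_vectors 2 {0, 1::nat}\<close>] show "I \<in> {[0,0,0],[1,1,1]}"
      by blast
  qed
  show "{[0,0,0],[1,1,1]} \<subseteq> C2 2 1 1 {0, 1::nat}"
  proof -
    have "[0,0,0::nat] \<in> C2 2 1 1 {0, 1::nat}" by (simp add: C2_def occ_def occ_counts_def input_vectors_def)
    moreover have "[1,1,1::nat] \<in> C2 2 1 1 {0, 1::nat}" by (simp add: C2_def occ_def occ_counts_def input_vectors_def)
    ultimately show ?thesis by blast
  qed
qed

lemma val_ok:
  assumes "I \<in> Cp" "q \<le> 2" "dlt (fi_view 2 I w r q) = Some x"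
  shows "x = (if I = [0,0,0] then 0 else 1)"
proof -
  define S where "S = inits (fi_view 2 I w r q)"
  have S: "\<And>p v. (p, v) \<in> S \<Longrightarrow> v = I ! p"
    using inits_sub[OF assms(2), of I w r] unfolding S_def by blast
  have d: "dlt (fi_view 2 I w r q) = (if (0,1) \<in> S \<or> (1,1) \<in> S \<or> (2,1) \<in> S then Some 1
     else if (0,0) \<in> S \<or> (1,0) \<in> S then Some 0 else None)"
    unfolding dlt_def S_def Let_def by simp
  consider "I = [0,0,0]" | "I = [1,1,1]" | "I = [1,1,0]" using assms(1) unfolding Cp_def by blast
  then show ?thesis
  proof cases
    case 1
    then have "(0,1) \<notin> S" "(1,1) \<notin> S" "(2,1) \<notin> S" using S[of 0 1] S[of 1 1] S[of 2 1] by auto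
    then have "dlt (fi_view 2 I w r q) = (if (0,0) \<in> S \<or> (1,0) \<in> S then Some 0 else None)" using d by simp
    then have "x = 0" using assms(3) by (simp split: if_splits)
    then show ?thesis using 1 by simp
  next
    case 2
    then have "(0,0) \<notin> S" "(1,0) \<notin> S" using S[of 0 0] S[of 1 0] by auto
    then have "dlt (fi_view 2 I w r q) = (if (0,1) \<in> S \<or> (1,1) \<in> S \<or> (2,1) \<in> S then Some 1 else None)" using d by simp
    then have "x = 1" using assms(3) by (simp split: if_splits)
    then show ?thesis using 2 by simp
  next
    case 3
    then have "(0,0) \<notin> S" "(1,0) \<notin> S" using S[of 0 0] S[of 1 0] by auto
    then have "dlt (fi_view 2 I w r q) = (if (0,1) \<in> S \<or> (1,1) \<in> S \<or> (2,1) \<in> S then Some 1 else None)" using d by simp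
    then have "x = 1" using assms(3) by (simp split: if_splits)
    then show ?thesis using 3 by simp
  qed
qed

lemma defined:
  assumes "I \<in> Cp" "q \<le> 2" "w \<in> Rmodel 2 1"
  shows "\<exists>r. dlt (fi_view 2 I w r q) \<noteq> None"
proof -
  have self: "\<forall>r. (p, p) \<in> w r" if "p \<le> 2" for p
  proof
    fix r
    have "ImS 2 (w r)" using assms(3) by (simp add: Rmodel_def IIS_def)
    then have "\<forall>a\<le>2. (a, a) \<in> w r" unfolding ImS_def by (elim conjE)
    then show "(p, p) \<in> w r" using that by blast
  qed
  have I3: "I ! 0 \<in> {0,1} \<and> I ! 1 \<in> {0,1}" using assms(1) by (auto simp: Cp_def)
  have key: "\<exists>r. dlt (fi_view 2 I w r q) \<noteq> None" if "p \<le> 1" "(p, I ! p) \<in> inits (fi_view 2 I w r q)" for p r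
  proof -
    have "p = 0 \<or> p = 1" using that(1) by auto
    then show ?thesis
    proof
      assume "p = 0"
      then show ?thesis using that(2) I3 unfolding dlt_def Let_def by (intro exI[of _ r]) auto
    next
      assume "p = 1"
      then show ?thesis using that(2) I3 unfolding dlt_def Let_def by (intro exI[of _ r]) auto
    qed
  qed
  show ?thesis
  proof (cases "q \<le> 1")
    case True
    have "(q, I ! q) \<in> inits (fi_view 2 I w 0 q)" by simp
    then show ?thesis using key[of q 0] True by blast
  next
    case False
    have Q: "card (Qset 2 w) \<ge> 2" using assms(3) by (simp add: Rmodel_def)
    have "\<exists>p\<in>Qset 2 w. p \<noteq> 2"
    proof (rule ccontr)
      assume "\<not> ?thesis"
      then have "Qset 2 w \<subseteq> {2}" by (auto simp: Qset_def)
      then have "card (Qset 2 w) \<le> 1"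
        using card_mono[of "{2::nat}" "Qset 2 w"] by simp
      with Q show False by simp
    qed
    then obtain p where p: "p \<in> Qset 2 w" "p \<noteq> 2" by blast
    then have pl: "p \<le> 1" by (auto simp: Qset_def)
    from p have "infinite {r. \<forall>q\<le>2. (p, q) \<in> w r}" by (simp add: Qset_def)
    then obtain r where "\<forall>q\<le>2. (p, q) \<in> w r" using not_finite_existsD by blast
    then have pq: "(p, q) \<in> w r" using assms(2) by simp
    have "(p, I ! p) \<in> inits (fi_view 2 I w r p)"
      using inits_self[of p w 2 I r] self pl by simp
    then have "(p, I ! p) \<in> inits (fi_view 2 I w (Suc r) q)"
      using inits_step[of p q w r 2 I] pq pl by (meson le_trans one_le_numeral subsetD)
    then show ?thesis using key pl by blast
  qed
qed

lemma dec_val: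
  assumes I: "I \<in> Cp" and w: "w \<in> Rmodel 2 1" and q: "q \<le> 2"
  shows "decision dlt 2 I w q = (if I = [0,0,0] then 0 else 1)"
proof -
  have ex: "\<exists>r. dlt (fi_view 2 I w r q) \<noteq> None" using defined I q w by blast
  let ?r = "LEAST r. dlt (fi_view 2 I w r q) \<noteq> None"
  have "dlt (fi_view 2 I w ?r q) \<noteq> None" using ex by (rule LeastI_ex)
  then obtain x where x: "dlt (fi_view 2 I w ?r q) = Some x" by blast
  then have "x = (if I = [0,0,0] then 0 else 1)" using val_ok[OF I q] by blast
  moreover have "decision dlt 2 I w q = x" unfolding decision_def x by simp
  ultimately show ?thesis by simp
qed

lemma solves: "solves_set_agreement 2 1 1 Cp dlt"
  unfolding solves_set_agreement_def
proof (intro ballI conjI)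
  fix I w
  assume I: "I \<in> Cp" and w: "w \<in> Rmodel 2 1"
  define v where "v = (if I = [0,0,0] then 0 else (1::nat))"
  have dec: "\<And>q. q \<le> 2 \<Longrightarrow> decision dlt 2 I w q = v"
    using dec_val[OF I w] unfolding v_def by blast
  show "\<forall>q\<le>2. \<exists>r. dlt (fi_view 2 I w r q) \<noteq> None" using defined I w by blast
  have "v \<in> set I" using I unfolding v_def Cp_def by auto
  then show "\<forall>q\<le>2. decision dlt 2 I w q \<in> set I" using dec by simp
  have "{decision dlt 2 I w q | q. q \<le> 2} = {v}"
  proof
    show "{decision dlt 2 I w q | q. q \<le> 2} \<subseteq> {v}" using dec by blast
    have "decision dlt 2 I w 0 = v" using dec by simp
    then show "{v} \<subseteq> {decision dlt 2 I w q | q. q \<le> 2}" by blast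
  qed
  then show "card {decision dlt 2 I w q | q. q \<le> 2} \<le> 1" by simp
qed

lemma strict: "C2 2 1 1 {0, 1::nat} \<subset> Cp"
proof -
  have a: "[1,1,0::nat] \<notin> {[0,0,0],[1,1,1]}" by simp
  have b: "[1,1,0::nat] \<in> Cp" by (simp add: Cp_def)
  have c: "{[0,0,0],[1,1,1::nat]} \<subseteq> Cp" by (simp add: Cp_def)
  have d: "{[0,0,0],[1,1,1::nat]} \<noteq> Cp"
  proof
    assume "{[0,0,0],[1,1,1::nat]} = Cp"
    then show False using a b by simp
  qed
  show ?thesis unfolding C2_eq using c d by (rule psubsetI)
qed

theorem mainTheorem13:
  shows "\<exists>C' :: nat list set.
           C2 2 1 1 {0, 1} \<subset> C'
         \<and> C' \<subseteq> input_vectors 2 {0, 1}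
         \<and> set_agreement_solvable 2 1 1 C'"
proof (intro exI conjI)
  show "C2 2 1 1 {0, 1} \<subset> Cp" by (rule strict)
  show "Cp \<subseteq> input_vectors 2 {0, 1}" by (simp add: Cp_def input_vectors_def)
  show "set_agreement_solvable 2 1 1 Cp"
    unfolding set_agreement_solvable_def using solves by blast
qed

end
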